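(* Let $X,A,M,Y$ be random variables, $R_M,R_Y\in\{0,1\}$, $R_{MY}=R_MR_Y$. Assume $R_M\perp\!\!\!\perp (M,R_Y)\mid X,A,Y$ and $R_Y\perp\!\!\!\perp (Y,R_M)\mid X,A,M$, and that all conditional probabilities $\text{P}(R_M=r_M,R_Y=r_Y\mid X,A,M,Y)$, $(r_M,r_Y)\in\{0,1\}^2$, are positive almost surely. Then almost surely $$\frac{\text{P}(R_M=0,R_Y=0\mid X,A)}{\text{P}(R_M=1,R_Y=1\mid X,A)}=\text{E}\!\left[\text{odds}(R_M=0\mid X,A,M,Y,R_Y=1)\,\text{odds}(R_Y=0\mid X,A,M,Y,R_M=1)\;\Big|\;X,A,R_{MY}=1\right].$$
   Context: $U\perp\!\!\!\perp V\mid W$ denotes conditional independence. $R_M,R_Y$ are the indicators that $M$, $Y$ are observed, $R_{MY}=R_MR_Y$. For a binary $R$ and conditioning variables $Z$, $\text{odds}(R=0\mid Z)=\text{P}(R=0\mid Z)/\text{P}(R=1\mid Z)$. *)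

theory Defs
  imports "HOL-Probability.Probability"
begin

definition gen_sigma :: "'w measure \<Rightarrow> ('w \<Rightarrow> 'b) \<Rightarrow> 'b measure \<Rightarrow> 'w measure" where
  "gen_sigma M f N = vimage_algebra (space M) f N"

definition event_of :: "'w measure \<Rightarrow> ('w \<Rightarrow> bool) \<Rightarrow> 'w set" where
  "event_of M P = {w \<in> space M. P w}"

definition cprob :: "'w measure \<Rightarrow> 'w measure \<Rightarrow> 'w set \<Rightarrow> 'w \<Rightarrow> real" where
  "cprob M F E = real_cond_exp M F (indicator E)"

definition cprob_on :: "'w measure \<Rightarrow> 'w measure \<Rightarrow> 'w set \<Rightarrow> 'w set \<Rightarrow> 'w \<Rightarrow> real" where
  "cprob_on M F E B = (\<lambda>w. cprob M F (E \<inter> B) w / cprob M F B w)"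

definition cexp_on :: "'w measure \<Rightarrow> 'w measure \<Rightarrow> ('w \<Rightarrow> real) \<Rightarrow> 'w set \<Rightarrow> 'w \<Rightarrow> real" where
  "cexp_on M F f B = (\<lambda>w. real_cond_exp M F (\<lambda>v. indicator B v * f v) w / cprob M F B w)"

definition codds_on :: "'w measure \<Rightarrow> 'w measure \<Rightarrow> ('w \<Rightarrow> bool) \<Rightarrow> 'w set \<Rightarrow> 'w \<Rightarrow> real" where
  "codds_on M F R B = (\<lambda>w. cprob_on M F (event_of M (\<lambda>v. \<not> R v)) B w
                          / cprob_on M F (event_of M R) B w)"

definition cond_indep :: "'w measure \<Rightarrow> 'w measure \<Rightarrow> 'w measure \<Rightarrow> 'w measure \<Rightarrow> bool" where
  "cond_indep M F G H \<longleftrightarrow>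
     (\<forall>E1\<in>sets F. \<forall>E2\<in>sets G.
        AE w in M. cprob M H (E1 \<inter> E2) w = cprob M H E1 w * cprob M H E2 w)"

end

theory Submission
  imports Defs
begin

lemma vimage_sub:
  assumes "f \<in> measurable K P"
  shows "sets (vimage_algebra (space K) f P) \<subseteq> sets K"
proof -
  have "f \<in> space K \<rightarrow> space P" using measurable_space[OF assms] by auto
  then show ?thesis using measurable_sets[OF assms] by (auto simp: sets_vimage_algebra2)
qed

lemma subalg_gen:
  assumes "f \<in> measurable M N"
  shows "subalgebra M (gen_sigma M f N)"
  using vimage_sub[OF assms] unfolding subalgebra_def gen_sigma_def by simp

lemma sfs:
  assumes "prob_space M" "subalgebra M F"
  shows "sigma_finite_subalgebra M F"
proof -
  interpret prob_space M by fact
  have "finite_measure_subalgebra M F"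
    unfolding finite_measure_subalgebra_def finite_measure_subalgebra_axioms_def
    using assms(2) finite_measure_axioms by simp
  then show ?thesis by (rule finite_measure_subalgebra_is_sigma_finite)
qed

lemma cprob_bounds:
  assumes "prob_space M" "subalgebra M F" "A \<in> sets M"
  shows "AE w in M. 0 \<le> cprob M F A w \<and> cprob M F A w \<le> 1"
proof -
  interpret prob_space M by fact
  interpret S: sigma_finite_subalgebra M F using sfs assms by blast
  have i1: "integrable M (indicator A :: 'a \<Rightarrow> real)"
    using assms(3) by (intro integrable_const_bound[where B=1]) (auto simp: indicator_def intro: borel_measurable_indicator)
  have i2: "integrable M (\<lambda>_. 1::real)" by simp
  have "AE w in M. 0 \<le> real_cond_exp M F (indicator A) w"
    by (rule S.real_cond_exp_pos) (auto simp: assms intro: borel_measurable_indicator)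
  moreover have "AE w in M. real_cond_exp M F (indicator A) w \<le> real_cond_exp M F (\<lambda>_. 1) w"
    by (rule S.real_cond_exp_mono[OF _ i1 i2]) (auto simp: indicator_def)
  moreover have "AE w in M. real_cond_exp M F (\<lambda>_. 1::real) w = 1"
    by (rule S.real_cond_exp_F_meas[OF i2]) simp
  ultimately show ?thesis unfolding cprob_def by eventually_elim auto
qed

lemma set_int_compl:
  fixes g :: "'a \<Rightarrow> real"
  assumes "integrable M g" "A \<in> sets M"
  shows "set_lebesgue_integral M (space M - A) g = (\<integral>x. g x \<partial>M) - set_lebesgue_integral M A g"
proof -
  have "set_lebesgue_integral M (A \<union> (space M - A)) g = set_lebesgue_integral M A g + set_lebesgue_integral M (space M - A) g"
    using integrable_mult_indicator[OF _ assms(1)] assms(2)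
    by (intro set_integral_Un) (auto simp: set_integrable_def)
  moreover have "A \<union> (space M - A) = space M" using sets.sets_into_space[OF assms(2)] by auto
  ultimately show ?thesis using set_integral_space[OF assms(1)] by simp
qed

lemma nn_real:
  assumes "sigma_finite_subalgebra M F" "integrable M f" "\<And>x. f x \<ge> 0"
  shows "AE x in M. ennreal (real_cond_exp M F f x) = nn_cond_exp M F (\<lambda>x. ennreal (f x)) x"
proof -
  interpret S: sigma_finite_subalgebra M F by fact
  have fm[measurable]: "f \<in> borel_measurable M" using assms(2) by auto
  have z: "(\<lambda>x. ennreal (- f x)) = (\<lambda>_. 0)" using assms(3) by (auto simp: ennreal_neg)
  have "AE x in M. 0 = nn_cond_exp M F (\<lambda>x. 0) x"
    by (rule S.nn_cond_exp_F_meas) auto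
  moreover have "(\<integral>\<^sup>+x. nn_cond_exp M F (\<lambda>x. ennreal (f x)) x \<partial>M) = (\<integral>\<^sup>+x. ennreal (f x) \<partial>M)"
    using S.nn_cond_exp_intg[of "\<lambda>_. 1" "\<lambda>x. ennreal (f x)"] by simp
  then have "(\<integral>\<^sup>+x. nn_cond_exp M F (\<lambda>x. ennreal (f x)) x \<partial>M) \<noteq> \<infinity>"
    using assms(2) assms(3) by (simp add: integrable_iff_bounded less_top)
  then have "AE x in M. nn_cond_exp M F (\<lambda>x. ennreal (f x)) x \<noteq> \<infinity>"
    by (intro nn_integral_PInf_AE) auto
  ultimately show ?thesis unfolding real_cond_exp_def z
    by eventually_elim (auto simp: ennreal_enn2real_if)
qed

lemma gen_facts:
  fixes M :: "'w measure" and \<psi> :: "'w \<Rightarrow> 'p" and \<zeta> :: "'w \<Rightarrow> 'q" and \<phi> :: "'w \<Rightarrow> 'n"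
  assumes \<psi>m: "\<psi> \<in> measurable M P" and \<zeta>m: "\<zeta> \<in> measurable M Q" and \<phi>m: "\<phi> \<in> measurable M N"
    and hm: "h \<in> measurable (P \<Otimes>\<^sub>M Q) N" and h\<phi>: "\<And>w. w \<in> space M \<Longrightarrow> \<phi> w = h (\<psi> w, \<zeta> w)"
    and km: "k \<in> measurable N P" and k\<psi>: "\<And>w. w \<in> space M \<Longrightarrow> \<psi> w = k (\<phi> w)"
    and lm: "l \<in> measurable N Q" and l\<zeta>: "\<And>w. w \<in> space M \<Longrightarrow> \<zeta> w = l (\<phi> w)"
    and Gen: "Gen = {T \<inter> (\<zeta> -` C \<inter> space M) | T C. T \<in> sets (gen_sigma M \<psi> P) \<and> C \<in> sets Q}"
  shows "Gen \<subseteq> Pow (space M)" "Int_stable Gen" "space M \<in> Gen"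
    "sets (gen_sigma M \<phi> N) = sigma_sets (space M) Gen"
    "sets (gen_sigma M \<psi> P) \<subseteq> sets (gen_sigma M \<phi> N)"
    "\<zeta> \<in> measurable (gen_sigma M \<phi> N) Q"
proof -
  let ?\<Omega> = "space M"
  let ?G = "gen_sigma M \<phi> N" and ?H = "gen_sigma M \<psi> P"
  have spG: "space ?G = ?\<Omega>" "space ?H = ?\<Omega>" unfolding gen_sigma_def by simp_all
  have \<phi>G: "\<phi> \<in> measurable ?G N" unfolding gen_sigma_def
    by (rule measurable_vimage_algebra1) (use measurable_space[OF \<phi>m] in auto)
  have \<psi>G: "\<psi> \<in> measurable ?G P"
  proof -
    have "(\<lambda>w. k (\<phi> w)) \<in> measurable ?G P" using measurable_compose[OF \<phi>G km] .
    then show ?thesis using measurable_cong[of ?G \<psi> "\<lambda>w. k (\<phi> w)"] k\<psi> spG by simp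
  qed
  show \<zeta>G: "\<zeta> \<in> measurable ?G Q"
  proof -
    have "(\<lambda>w. l (\<phi> w)) \<in> measurable ?G Q" using measurable_compose[OF \<phi>G lm] .
    then show ?thesis using measurable_cong[of ?G \<zeta> "\<lambda>w. l (\<phi> w)"] l\<zeta> spG by simp
  qed
  show HG: "sets ?H \<subseteq> sets ?G"
    using vimage_sub[OF \<psi>G] spG unfolding gen_sigma_def by simp
  have Hsp: "T \<subseteq> ?\<Omega>" if "T \<in> sets ?H" for T
    using sets.sets_into_space[OF that] spG by simp
  show GP: "Gen \<subseteq> Pow ?\<Omega>" using Hsp unfolding Gen by blast
  show "Int_stable Gen"
    unfolding Int_stable_def Gen
  proof (safe)
    fix T C T' C' assume a: "T \<in> sets ?H" "C \<in> sets Q" "T' \<in> sets ?H" "C' \<in> sets Q"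
    show "\<exists>T'' C''. T \<inter> (\<zeta> -` C \<inter> ?\<Omega>) \<inter> (T' \<inter> (\<zeta> -` C' \<inter> ?\<Omega>)) = T'' \<inter> (\<zeta> -` C'' \<inter> ?\<Omega>) \<and> T'' \<in> sets ?H \<and> C'' \<in> sets Q"
      by (rule exI[of _ "T \<inter> T'"], rule exI[of _ "C \<inter> C'"]) (use a in auto)
  qed
  have OmH: "?\<Omega> \<in> sets ?H" using sets.top[of ?H] spG by simp
  have Oeq: "\<zeta> -` space Q \<inter> ?\<Omega> = ?\<Omega>" using measurable_space[OF \<zeta>m] by auto
  show OG: "?\<Omega> \<in> Gen" unfolding Gen
    by (rule CollectI, rule exI[of _ ?\<Omega>], rule exI[of _ "space Q"]) (use OmH Oeq in auto)
  show "sets ?G = sigma_sets ?\<Omega> Gen"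
  proof
    have "Gen \<subseteq> sets ?G"
    proof
      fix S assume "S \<in> Gen"
      then obtain T C where S: "S = T \<inter> (\<zeta> -` C \<inter> ?\<Omega>)" "T \<in> sets ?H" "C \<in> sets Q" unfolding Gen by blast
      have "\<zeta> -` C \<inter> ?\<Omega> \<in> sets ?G" using measurable_sets[OF \<zeta>G S(3)] spG by simp
      then show "S \<in> sets ?G" using S HG by auto
    qed
    then show "sigma_sets ?\<Omega> Gen \<subseteq> sets ?G" using sets.sigma_sets_subset[of Gen ?G] spG by simp
  next
    let ?S = "sigma ?\<Omega> Gen"
    have spS: "space ?S = ?\<Omega>" and setsS: "sets ?S = sigma_sets ?\<Omega> Gen"
      using GP by (simp_all add: sets_measure_of space_measure_of_conv)
    have "\<psi> \<in> measurable ?S P"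
      unfolding measurable_def
    proof (safe)
      fix w assume "w \<in> space ?S" then show "\<psi> w \<in> space P" using measurable_space[OF \<psi>m] spS by auto
    next
      fix A assume A: "A \<in> sets P"
      have "\<psi> -` A \<inter> ?\<Omega> \<in> sets ?H" unfolding gen_sigma_def by (rule in_vimage_algebra[OF A])
      then have "\<psi> -` A \<inter> ?\<Omega> \<inter> (\<zeta> -` space Q \<inter> ?\<Omega>) \<in> Gen" unfolding Gen by blast
      then show "\<psi> -` A \<inter> space ?S \<in> sets ?S" using Oeq spS setsS by auto
    qed
    moreover have "\<zeta> \<in> measurable ?S Q"
      unfolding measurable_def
    proof (safe)
      fix w assume "w \<in> space ?S" then show "\<zeta> w \<in> space Q" using measurable_space[OF \<zeta>m] spS by auto
    next
      fix C assume C: "C \<in> sets Q"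
      have "?\<Omega> \<inter> (\<zeta> -` C \<inter> ?\<Omega>) \<in> Gen" unfolding Gen using OmH C by blast
      moreover have "?\<Omega> \<inter> (\<zeta> -` C \<inter> ?\<Omega>) = \<zeta> -` C \<inter> ?\<Omega>" by blast
      ultimately show "\<zeta> -` C \<inter> space ?S \<in> sets ?S" using spS setsS by auto
    qed
    ultimately have "(\<lambda>w. h (\<psi> w, \<zeta> w)) \<in> measurable ?S N"
      by (intro measurable_compose[OF _ hm] measurable_Pair)
    then have "\<phi> \<in> measurable ?S N" using measurable_cong[of ?S \<phi>] h\<phi> spS by simp
    from vimage_sub[OF this] show "sets ?G \<subseteq> sigma_sets ?\<Omega> Gen"
      unfolding gen_sigma_def using spS setsS by simp
  qed
qed

lemma key:
  fixes M :: "'w measure" and \<psi> :: "'w \<Rightarrow> 'p" and \<zeta> :: "'w \<Rightarrow> 'q" and \<phi> :: "'w \<Rightarrow> 'n"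
    and \<rho>1 \<rho>2 :: "'w \<Rightarrow> bool"
  assumes PS: "prob_space M"
    and \<psi>m: "\<psi> \<in> measurable M P" and \<zeta>m: "\<zeta> \<in> measurable M Q" and \<phi>m: "\<phi> \<in> measurable M N"
    and hm: "h \<in> measurable (P \<Otimes>\<^sub>M Q) N" and h\<phi>: "\<And>w. w \<in> space M \<Longrightarrow> \<phi> w = h (\<psi> w, \<zeta> w)"
    and km: "k \<in> measurable N P" and k\<psi>: "\<And>w. w \<in> space M \<Longrightarrow> \<psi> w = k (\<phi> w)"
    and lm: "l \<in> measurable N Q" and l\<zeta>: "\<And>w. w \<in> space M \<Longrightarrow> \<zeta> w = l (\<phi> w)"
    and \<rho>1m: "\<rho>1 \<in> measurable M (count_space UNIV)" and \<rho>2m: "\<rho>2 \<in> measurable M (count_space UNIV)"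
    and CI: "cond_indep M (gen_sigma M \<rho>1 (count_space UNIV))
           (gen_sigma M (\<lambda>w. (\<zeta> w, \<rho>2 w)) (Q \<Otimes>\<^sub>M count_space UNIV)) (gen_sigma M \<psi> P)"
  shows "AE w in M. cprob M (gen_sigma M \<phi> N) (event_of M (\<lambda>v. \<rho>1 v = r) \<inter> {w \<in> space M. \<rho>2 w \<in> B}) w
     = cprob M (gen_sigma M \<psi> P) (event_of M (\<lambda>v. \<rho>1 v = r)) w * cprob M (gen_sigma M \<phi> N) {w \<in> space M. \<rho>2 w \<in> B} w"
proof -
  define Gen where "Gen = {T \<inter> (\<zeta> -` C \<inter> space M) | T C. T \<in> sets (gen_sigma M \<psi> P) \<and> C \<in> sets Q}"
  note gf0 = gen_facts[OF \<psi>m \<zeta>m \<phi>m hm h\<phi> km k\<psi> lm l\<zeta> Gen_def]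
  have gf: "Gen \<subseteq> Pow (space M)" "Int_stable Gen" "space M \<in> Gen"
    "sets (gen_sigma M \<phi> N) = sigma_sets (space M) Gen"
    "sets (gen_sigma M \<psi> P) \<subseteq> sets (gen_sigma M \<phi> N)"
    using gf0 by blast+
  interpret prob_space M by fact
  let ?G = "gen_sigma M \<phi> N" and ?H = "gen_sigma M \<psi> P"
  have subG: "subalgebra M ?G" by (rule subalg_gen[OF \<phi>m])
  have subH: "subalgebra M ?H" by (rule subalg_gen[OF \<psi>m])
  have subGH: "subalgebra ?G ?H" unfolding subalgebra_def using gf(5) by (simp add: gen_sigma_def)
  interpret G: sigma_finite_subalgebra M ?G using sfs subG PS by blast
  interpret H: sigma_finite_subalgebra M ?H using sfs subH PS by blast
  have HM: "sets ?H \<subseteq> sets M" and GM: "sets ?G \<subseteq> sets M" using subH subG by (auto simp: subalgebra_def)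
  define E where "E = event_of M (\<lambda>v. \<rho>1 v = r)"
  define D where "D = {w \<in> space M. \<rho>2 w \<in> B}"
  have Eeq: "E = \<rho>1 -` {r} \<inter> space M" by (auto simp: E_def event_of_def)
  have Deq: "D = \<rho>2 -` B \<inter> space M" by (auto simp: D_def)
  have E[measurable]: "E \<in> sets M" unfolding Eeq by (rule measurable_sets[OF \<rho>1m]) simp
  have D[measurable]: "D \<in> sets M" unfolding Deq by (rule measurable_sets[OF \<rho>2m]) simp
  define q where "q = cprob M ?H E"
  define d where "d = cprob M ?G D"
  define c where "c = (\<lambda>w. q w * d w)"
  have qH: "q \<in> borel_measurable ?H" unfolding q_def cprob_def by simp
  have qG: "q \<in> borel_measurable ?G" by (rule measurable_from_subalg[OF subGH qH])
  have dG: "d \<in> borel_measurable ?G" unfolding d_def cprob_def by simp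
  have qM[measurable]: "q \<in> borel_measurable M" unfolding q_def cprob_def by simp
  have dM[measurable]: "d \<in> borel_measurable M" unfolding d_def cprob_def by simp
  have cG: "c \<in> borel_measurable ?G" unfolding c_def using qG dG by simp
  have qb: "AE w in M. 0 \<le> q w \<and> q w \<le> 1" unfolding q_def by (rule cprob_bounds[OF PS subH E])
  have db: "AE w in M. 0 \<le> d w \<and> d w \<le> 1" unfolding d_def by (rule cprob_bounds[OF PS subG D])
  have intf: "integrable M (indicator (E \<inter> D) :: 'w \<Rightarrow> real)"
    by (intro integrable_const_bound[where B=1]) (auto simp: indicator_def)
  have intc: "integrable M c"
  proof (intro integrable_const_bound[where B=1])
    show "AE x in M. norm (c x) \<le> 1" using qb db unfolding c_def
      by eventually_elim (auto simp: abs_mult intro: mult_le_one)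
  qed (simp add: c_def)
  have basic: "set_lebesgue_integral M S (indicator (E \<inter> D)) = set_lebesgue_integral M S c"
    if "S \<in> Gen" for S
  proof -
    obtain T C where S: "S = T \<inter> (\<zeta> -` C \<inter> space M)" "T \<in> sets ?H" "C \<in> sets Q"
      using \<open>S \<in> Gen\<close> unfolding Gen_def by blast
    define U where "U = \<zeta> -` C \<inter> space M"
    have SG: "S \<in> sets ?G" using that gf(4) by auto
    have SM[measurable]: "S \<in> sets M" using SG GM by auto
    have TM[measurable]: "T \<in> sets M" using S(2) HM by auto
    have UDeq: "U \<inter> D = (\<lambda>w. (\<zeta> w, \<rho>2 w)) -` (C \<times> B) \<inter> space M" by (auto simp: U_def D_def)
    have UDs: "U \<inter> D \<in> sets (gen_sigma M (\<lambda>w. (\<zeta> w, \<rho>2 w)) (Q \<Otimes>\<^sub>M count_space UNIV))"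
      unfolding UDeq gen_sigma_def by (rule in_vimage_algebra) (simp add: pair_measureI S(3))
    have UDM[measurable]: "U \<inter> D \<in> sets M" unfolding U_def by (meson S(3) \<zeta>m measurable_sets D sets.Int)
    have Es: "E \<in> sets (gen_sigma M \<rho>1 (count_space UNIV))"
      unfolding Eeq gen_sigma_def by (rule in_vimage_algebra) simp
    have CIinst: "AE w in M. cprob M ?H (E \<inter> (U \<inter> D)) w = q w * cprob M ?H (U \<inter> D) w"
      using CI Es UDs unfolding cond_indep_def q_def by blast
    have TH: "(indicator T :: 'w \<Rightarrow> real) \<in> borel_measurable ?H" using S(2) by simp
    have "set_lebesgue_integral M S (indicator (E \<inter> D)) = (\<integral>x. (indicator T x::real) * indicator (E \<inter> (U \<inter> D)) x \<partial>M)"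
      unfolding set_lebesgue_integral_def by (intro Bochner_Integration.integral_cong refl) (auto simp: S(1) U_def indicator_def)
    also have "\<dots> = (\<integral>x. (indicator T x::real) * cprob M ?H (E \<inter> (U \<inter> D)) x \<partial>M)"
      unfolding cprob_def
    proof (rule H.real_cond_exp_intg(2)[symmetric])
      have [measurable]: "E \<inter> (U \<inter> D) \<in> sets M" using UDM E by blast
      show "integrable M (\<lambda>x. (indicator T x::real) * indicator (E \<inter> (U \<inter> D)) x)"
        by (intro integrable_const_bound[where B=1]) (auto split: split_indicator)
      show "(indicator (E \<inter> (U \<inter> D)) :: 'w \<Rightarrow> real) \<in> borel_measurable M" by measurable
    qed (rule TH)
    also have "\<dots> = (\<integral>x. (indicator T x * q x) * cprob M ?H (U \<inter> D) x \<partial>M)"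
      by (rule integral_cong_AE) (use CIinst in \<open>auto simp: cprob_def\<close>)
    also have "\<dots> = (\<integral>x. (indicator T x * q x) * indicator (U \<inter> D) x \<partial>M)"
      unfolding cprob_def
    proof (rule H.real_cond_exp_intg(2))
      show "integrable M (\<lambda>x. indicator T x * q x * indicator (U \<inter> D) x)"
      proof (intro integrable_const_bound[where B=1])
        show "AE x in M. norm (indicator T x * q x * indicator (U \<inter> D) x) \<le> (1::real)" using qb
          by eventually_elim (auto simp: indicator_def)
      qed simp
    qed (use TH qH in \<open>simp_all add: borel_measurable_times\<close>)
    also have "\<dots> = (\<integral>x. (indicator S x * q x) * indicator D x \<partial>M)"
      by (intro Bochner_Integration.integral_cong refl) (auto simp: S(1) U_def indicator_def)
    also have "\<dots> = (\<integral>x. (indicator S x * q x) * d x \<partial>M)"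
      unfolding d_def cprob_def
    proof (rule G.real_cond_exp_intg(2)[symmetric])
      show "integrable M (\<lambda>x. indicator S x * q x * indicator D x)"
      proof (intro integrable_const_bound[where B=1])
        show "AE x in M. norm (indicator S x * q x * indicator D x) \<le> (1::real)" using qb
          by eventually_elim (auto simp: indicator_def)
      qed simp
      show "(\<lambda>x. indicator S x * q x) \<in> borel_measurable ?G" using SG qG by simp
    qed simp
    also have "\<dots> = set_lebesgue_integral M S c"
      unfolding set_lebesgue_integral_def c_def by (simp add: mult.assoc)
    finally show ?thesis .
  qed
  have main: "set_lebesgue_integral M S (indicator (E \<inter> D)) = set_lebesgue_integral M S c"
    if "S \<in> sets ?G" for S
  proof -
    from that have "S \<in> sigma_sets (space M) Gen" using gf(4) by simp
    then show ?thesis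
    proof (rule sigma_sets_induct_disjoint[where P="\<lambda>S. set_lebesgue_integral M S (indicator (E \<inter> D) :: 'w \<Rightarrow> real) = set_lebesgue_integral M S c", OF gf(2) gf(1)], goal_cases)
      case (1 A) then show ?case by (rule basic)
    next
      case 2 then show ?case by (simp add: set_lebesgue_integral_def)
    next
      case (3 A)
      note compl = 3
      have AM: "A \<in> sets M" using compl(1) gf(4) GM by auto
      have Om: "set_lebesgue_integral M (space M) (indicator (E \<inter> D)) = set_lebesgue_integral M (space M) c"
        by (rule basic[OF gf(3)])
      show ?case using set_int_compl[OF intf AM] set_int_compl[OF intc AM] compl(2) Om
        set_integral_space[OF intf] set_integral_space[OF intc] by simp
    next
      case (4 A)
      note union = 4
      have AM: "\<And>i. A i \<in> sets M" using union(2) gf(4) GM by auto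
      have disj: "\<And>i j. i \<noteq> j \<Longrightarrow> A i \<inter> A j = {}" using union(1) by (auto simp: disjoint_family_on_def)
      have UM: "(\<Union>i. A i) \<in> sets M" using AM by auto
      have s1: "set_integrable M (\<Union>i. A i) (indicator (E \<inter> D) :: 'w \<Rightarrow> real)"
        unfolding set_integrable_def by (rule integrable_mult_indicator[OF UM intf])
      have s2: "set_integrable M (\<Union>i. A i) c"
        unfolding set_integrable_def by (rule integrable_mult_indicator[OF UM intc])
      show ?case using lebesgue_integral_countable_add[OF AM disj s1] lebesgue_integral_countable_add[OF AM disj s2]
        union(3) by simp
    qed
  qed
  have "AE w in M. real_cond_exp M ?G (indicator (E \<inter> D)) w = c w"
    by (rule G.real_cond_exp_charact[OF main intf intc cG])
  then show ?thesis unfolding c_def q_def d_def cprob_def E_def D_def .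
qed

theorem mainTheorem5:
  fixes M :: "'w measure"
    and NX :: "'x measure" and NA :: "'a measure" and NM :: "'m measure" and NY :: "'y measure"
    and X :: "'w \<Rightarrow> 'x" and A :: "'w \<Rightarrow> 'a" and Mv :: "'w \<Rightarrow> 'm" and Y :: "'w \<Rightarrow> 'y"
    and RM :: "'w \<Rightarrow> bool" and RY :: "'w \<Rightarrow> bool"
  assumes "prob_space M"
    and "X \<in> measurable M NX" and "A \<in> measurable M NA"
    and "Mv \<in> measurable M NM" and "Y \<in> measurable M NY"
    and "RM \<in> measurable M (count_space UNIV)" and "RY \<in> measurable M (count_space UNIV)"
    and "cond_indep M (gen_sigma M RM (count_space UNIV))
           (gen_sigma M (\<lambda>w. (Mv w, RY w)) (NM \<Otimes>\<^sub>M count_space UNIV))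
           (gen_sigma M (\<lambda>w. (X w, A w, Y w)) (NX \<Otimes>\<^sub>M NA \<Otimes>\<^sub>M NY))"
    and "cond_indep M (gen_sigma M RY (count_space UNIV))
           (gen_sigma M (\<lambda>w. (Y w, RM w)) (NY \<Otimes>\<^sub>M count_space UNIV))
           (gen_sigma M (\<lambda>w. (X w, A w, Mv w)) (NX \<Otimes>\<^sub>M NA \<Otimes>\<^sub>M NM))"
    and "\<And>rm ry. AE w in M.
           cprob M (gen_sigma M (\<lambda>w. (X w, A w, Mv w, Y w)) (NX \<Otimes>\<^sub>M NA \<Otimes>\<^sub>M NM \<Otimes>\<^sub>M NY))
             (event_of M (\<lambda>v. RM v = rm \<and> RY v = ry)) w > 0"
  shows "AE w in M.
     cprob M (gen_sigma M (\<lambda>w. (X w, A w)) (NX \<Otimes>\<^sub>M NA))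
         (event_of M (\<lambda>v. \<not> RM v \<and> \<not> RY v)) w
     / cprob M (gen_sigma M (\<lambda>w. (X w, A w)) (NX \<Otimes>\<^sub>M NA))
         (event_of M (\<lambda>v. RM v \<and> RY v)) w
     = cexp_on M (gen_sigma M (\<lambda>w. (X w, A w)) (NX \<Otimes>\<^sub>M NA))
         (\<lambda>v. codds_on M (gen_sigma M (\<lambda>w. (X w, A w, Mv w, Y w)) (NX \<Otimes>\<^sub>M NA \<Otimes>\<^sub>M NM \<Otimes>\<^sub>M NY))
                  RM (event_of M RY) v
             * codds_on M (gen_sigma M (\<lambda>w. (X w, A w, Mv w, Y w)) (NX \<Otimes>\<^sub>M NA \<Otimes>\<^sub>M NM \<Otimes>\<^sub>M NY))
                  RY (event_of M RM) v)
         (event_of M (\<lambda>v. RM v \<and> RY v)) w"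
proof -
  note PS = assms(1)
  interpret prob_space M by (rule assms(1))
  note [measurable] = assms(2-7)
  let ?\<Omega> = "space M"
  let ?G = "gen_sigma M (\<lambda>w. (X w, A w, Mv w, Y w)) (NX \<Otimes>\<^sub>M NA \<Otimes>\<^sub>M NM \<Otimes>\<^sub>M NY)"
  let ?F = "gen_sigma M (\<lambda>w. (X w, A w)) (NX \<Otimes>\<^sub>M NA)"
  let ?H1 = "gen_sigma M (\<lambda>w. (X w, A w, Y w)) (NX \<Otimes>\<^sub>M NA \<Otimes>\<^sub>M NY)"
  let ?H2 = "gen_sigma M (\<lambda>w. (X w, A w, Mv w)) (NX \<Otimes>\<^sub>M NA \<Otimes>\<^sub>M NM)"
  have \<phi>m: "(\<lambda>w. (X w, A w, Mv w, Y w)) \<in> measurable M (NX \<Otimes>\<^sub>M NA \<Otimes>\<^sub>M NM \<Otimes>\<^sub>M NY)" by measurable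
  have \<psi>1m: "(\<lambda>w. (X w, A w, Y w)) \<in> measurable M (NX \<Otimes>\<^sub>M NA \<Otimes>\<^sub>M NY)" by measurable
  have \<psi>2m: "(\<lambda>w. (X w, A w, Mv w)) \<in> measurable M (NX \<Otimes>\<^sub>M NA \<Otimes>\<^sub>M NM)" by measurable
  have \<chi>m: "(\<lambda>w. (X w, A w)) \<in> measurable M (NX \<Otimes>\<^sub>M NA)" by measurable
  have K1: "AE w in M. cprob M ?G (event_of M (\<lambda>v. RM v = r) \<inter> {w \<in> space M. RY w \<in> B}) w
     = cprob M ?H1 (event_of M (\<lambda>v. RM v = r)) w * cprob M ?G {w \<in> space M. RY w \<in> B} w" for r B
    by (rule key[OF PS \<psi>1m assms(4) \<phi>m, where h="\<lambda>p. (fst (fst p), fst (snd (fst p)), snd p, snd (snd (fst p)))"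
         and k="\<lambda>p. (fst p, fst (snd p), snd (snd (snd p)))" and l="\<lambda>p. fst (snd (snd p))"])
       (simp_all add: assms(6,7,8))
  have K2: "AE w in M. cprob M ?G (event_of M (\<lambda>v. RY v = s) \<inter> {w \<in> space M. RM w \<in> B}) w
     = cprob M ?H2 (event_of M (\<lambda>v. RY v = s)) w * cprob M ?G {w \<in> space M. RM w \<in> B} w" for s B
    by (rule key[OF PS \<psi>2m assms(5) \<phi>m, where h="\<lambda>p. (fst (fst p), fst (snd (fst p)), snd (snd (fst p)), snd p)"
         and k="\<lambda>p. (fst p, fst (snd p), fst (snd (snd p)))" and l="\<lambda>p. snd (snd (snd p))"])
       (simp_all add: assms(6,7,9))
  have \<phi>G: "(\<lambda>w. (X w, A w, Mv w, Y w)) \<in> measurable ?G (NX \<Otimes>\<^sub>M NA \<Otimes>\<^sub>M NM \<Otimes>\<^sub>M NY)"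
    unfolding gen_sigma_def by (rule measurable_vimage_algebra1) (use measurable_space[OF \<phi>m] in auto)
  have prm: "(\<lambda>p. (fst p, fst (snd p))) \<in> measurable (NX \<Otimes>\<^sub>M NA \<Otimes>\<^sub>M NM \<Otimes>\<^sub>M NY) (NX \<Otimes>\<^sub>M NA)" by measurable
  have \<chi>G: "(\<lambda>w. (X w, A w)) \<in> measurable ?G (NX \<Otimes>\<^sub>M NA)"
    using measurable_compose[OF \<phi>G prm] by simp
  have spG: "space ?G = ?\<Omega>" and spF: "space ?F = ?\<Omega>" by (simp_all add: gen_sigma_def)
  have subG: "subalgebra M ?G" by (rule subalg_gen[OF \<phi>m])
  have subF: "subalgebra M ?F" by (rule subalg_gen[OF \<chi>m])
  have subGF: "subalgebra ?G ?F"
    unfolding subalgebra_def using vimage_sub[OF \<chi>G] spG spF by (simp add: gen_sigma_def)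
  interpret G: sigma_finite_subalgebra M ?G using sfs subG PS by blast
  interpret F: sigma_finite_subalgebra M ?F using sfs subF PS by blast
  have evs: "event_of M P \<in> sets M" if "Measurable.pred M P" for P
    unfolding event_of_def using that by measurable
  define p where "p r s = cprob M ?G (event_of M (\<lambda>v. RM v = r \<and> RY v = s))" for r s
  define q where "q r = cprob M ?H1 (event_of M (\<lambda>v. RM v = r))" for r
  define q' where "q' s = cprob M ?H2 (event_of M (\<lambda>v. RY v = s))" for s
  define cR where "cR r = cprob M ?G (event_of M (\<lambda>v. RM v = r))" for r
  define cS where "cS s = cprob M ?G (event_of M (\<lambda>v. RY v = s))" for s
  have indO: "integrable M (indicator ?\<Omega> :: 'w \<Rightarrow> real)"
    by (intro integrable_const_bound[where B=1]) (auto split: split_indicator)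
  have OG: "?\<Omega> \<in> sets ?G" using sets.top[of ?G] spG by simp
  have "AE w in M. real_cond_exp M ?G (indicator ?\<Omega>) w = indicator ?\<Omega> w"
    by (rule G.real_cond_exp_F_meas[OF indO]) (rule borel_measurable_indicator[OF OG])
  then have cO: "AE w in M. cprob M ?G ?\<Omega> w = 1"
    using AE_space unfolding cprob_def by eventually_elim auto
  have evO: "event_of M P \<inter> space M = event_of M P" for P by (auto simp: event_of_def)
  have Fb: "AE w in M. cR r w = q r w" for r
  proof -
    have e1: "event_of M (\<lambda>v. RM v = r) \<inter> {w \<in> space M. RY w \<in> UNIV} = event_of M (\<lambda>v. RM v = r)"
      by (auto simp: event_of_def)
    have e2: "{w \<in> space M. RY w \<in> UNIV} = ?\<Omega>" by auto
    from K1[of r UNIV] cO show ?thesis unfolding e1 e2 cR_def q_def by eventually_elim (simp add: evO)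
  qed
  have Fc: "AE w in M. cS s w = q' s w" for s
  proof -
    have e1: "event_of M (\<lambda>v. RY v = s) \<inter> {w \<in> space M. RM w \<in> UNIV} = event_of M (\<lambda>v. RY v = s)"
      by (auto simp: event_of_def)
    have e2: "{w \<in> space M. RM w \<in> UNIV} = ?\<Omega>" by auto
    from K2[of s UNIV] cO show ?thesis unfolding e1 e2 cS_def q'_def by eventually_elim (simp add: evO)
  qed
  have Fa: "AE w in M. p r s w = q' s w * q r w" for r s
  proof -
    have e1: "event_of M (\<lambda>v. RY v = s) \<inter> event_of M (\<lambda>v. RM v = r) = event_of M (\<lambda>v. RM v = r \<and> RY v = s)"
      by (auto simp: event_of_def)
    have e2: "{w \<in> space M. RM w \<in> {r}} = event_of M (\<lambda>v. RM v = r)" by (auto simp: event_of_def)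
    from K2[of s "{r}"] Fb[of r] show ?thesis unfolding e2 e1 p_def q'_def cR_def[symmetric]
      by eventually_elim simp
  qed
  have pos: "AE w in M. p r s w > 0" for r s unfolding p_def by (rule assms(10))
  define g where "g = (\<lambda>v. p False False v / p True True v)"
  have s1: "event_of M (\<lambda>v. \<not> RM v) \<inter> event_of M RY = event_of M (\<lambda>v. RM v = False \<and> RY v = True)"
    by (auto simp: event_of_def)
  have s2: "event_of M RM \<inter> event_of M RY = event_of M (\<lambda>v. RM v = True \<and> RY v = True)"
    by (auto simp: event_of_def)
  have s4: "event_of M (\<lambda>v. \<not> RY v) \<inter> event_of M RM = event_of M (\<lambda>v. RM v = True \<and> RY v = False)"
    by (auto simp: event_of_def)
  have s5: "event_of M RY \<inter> event_of M RM = event_of M (\<lambda>v. RM v = True \<and> RY v = True)"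
    by (auto simp: event_of_def)
  have c1: "codds_on M ?G RM (event_of M RY) = (\<lambda>v. (p False True v / cS True v) / (p True True v / cS True v))"
    unfolding codds_on_def cprob_on_def p_def cS_def s1 s2 by simp
  have c2: "codds_on M ?G RY (event_of M RM) = (\<lambda>v. (p True False v / cR True v) / (p True True v / cR True v))"
    unfolding codds_on_def cprob_on_def p_def cR_def s4 s5 by simp
  have fcg: "AE v in M. codds_on M ?G RM (event_of M RY) v * codds_on M ?G RY (event_of M RM) v = g v"
    using Fa[of False False] Fa[of False True] Fa[of True False] Fa[of True True]
      pos[of False False] pos[of False True] pos[of True False] pos[of True True]
      Fb[of True] Fc[of True]
  proof eventually_elim
    case (elim v)
    have nz: "q True v \<noteq> 0" "q False v \<noteq> 0" "q' True v \<noteq> 0" "q' False v \<noteq> 0"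
      using elim by auto
    show ?case unfolding c1 c2 g_def using elim nz by (simp add: field_simps)
  qed
  let ?E11 = "event_of M (\<lambda>v. RM v \<and> RY v)" and ?E00 = "event_of M (\<lambda>v. \<not> RM v \<and> \<not> RY v)"
  have p11: "p True True = cprob M ?G ?E11" by (simp add: p_def)
  have p00: "p False False = cprob M ?G ?E00" by (simp add: p_def)
  have E11M[measurable]: "?E11 \<in> sets M" by (rule evs) measurable
  have E00M[measurable]: "?E00 \<in> sets M" by (rule evs) measurable
  have gG: "g \<in> borel_measurable ?G" unfolding g_def p_def cprob_def by measurable
  have gM[measurable]: "g \<in> borel_measurable M" unfolding g_def p_def cprob_def by measurable
  have int11: "integrable M (indicator ?E11 :: 'w \<Rightarrow> real)"
    by (intro integrable_const_bound[where B=1]) (auto split: split_indicator)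
  have int00: "integrable M (indicator ?E00 :: 'w \<Rightarrow> real)"
    by (intro integrable_const_bound[where B=1]) (auto split: split_indicator)
  have p00int: "integrable M (p False False)" unfolding p00 cprob_def by (rule G.real_cond_exp_int(1)[OF int00])
  have nnr: "AE x in M. ennreal (p True True x) = nn_cond_exp M ?G (\<lambda>x. ennreal (indicator ?E11 x)) x"
    unfolding p11 cprob_def by (rule nn_real[OF sfs[OF PS subG] int11]) simp
  have intg: "integrable M (\<lambda>x. g x * indicator ?E11 x)"
    unfolding integrable_iff_bounded
  proof
    show "(\<lambda>x. g x * indicator ?E11 x) \<in> borel_measurable M" by measurable
    have "(\<integral>\<^sup>+x. ennreal (norm (g x * indicator ?E11 x)) \<partial>M) = (\<integral>\<^sup>+x. ennreal \<bar>g x\<bar> * ennreal (indicator ?E11 x) \<partial>M)"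
      by (intro nn_integral_cong) (auto split: split_indicator)
    also have "\<dots> = (\<integral>\<^sup>+x. ennreal \<bar>g x\<bar> * nn_cond_exp M ?G (\<lambda>x. ennreal (indicator ?E11 x)) x \<partial>M)"
      by (rule G.nn_cond_exp_intg[symmetric]) (use gG in simp_all)
    also have "\<dots> = (\<integral>\<^sup>+x. ennreal \<bar>g x\<bar> * ennreal (p True True x) \<partial>M)"
      by (rule nn_integral_cong_AE) (use nnr in eventually_elim, simp)
    also have "\<dots> = (\<integral>\<^sup>+x. ennreal (norm (p False False x)) \<partial>M)"
    proof (rule nn_integral_cong_AE)
      show "AE x in M. ennreal \<bar>g x\<bar> * ennreal (p True True x) = ennreal (norm (p False False x))"
        using pos[of True True]
      proof eventually_elim
        case (elim x)
        then have "\<bar>g x\<bar> * p True True x = \<bar>p False False x\<bar>"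
          unfolding g_def by (simp add: abs_div)
        then show ?case using elim by (simp add: ennreal_mult[symmetric])
      qed
    qed
    also have "\<dots> < \<infinity>" using p00int by (simp add: integrable_iff_bounded)
    finally show "(\<integral>\<^sup>+x. ennreal (norm (g x * indicator ?E11 x)) \<partial>M) < \<infinity>" .
  qed
  have m1: "AE x in M. real_cond_exp M ?G (\<lambda>x. g x * indicator ?E11 x) x = g x * real_cond_exp M ?G (indicator ?E11) x"
    by (rule G.real_cond_exp_mult[OF gG _ intg]) simp
  have m2: "AE x in M. real_cond_exp M ?G (\<lambda>x. g x * indicator ?E11 x) x = real_cond_exp M ?G (indicator ?E00) x"
    using m1 pos[of True True]
  proof eventually_elim
    case (elim x)
    then show ?case using p11 p00 unfolding g_def cprob_def by simp
  qed
  have A1: "AE x in M. real_cond_exp M ?F (real_cond_exp M ?G (\<lambda>x. g x * indicator ?E11 x)) x = real_cond_exp M ?F (\<lambda>x. g x * indicator ?E11 x) x"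
    by (rule F.real_cond_exp_nested_subalg[OF subG subGF intg])
  have A2: "AE x in M. real_cond_exp M ?F (real_cond_exp M ?G (\<lambda>x. g x * indicator ?E11 x)) x = real_cond_exp M ?F (real_cond_exp M ?G (indicator ?E00)) x"
    by (rule F.real_cond_exp_cong[OF m2]) simp_all
  have A3: "AE x in M. real_cond_exp M ?F (real_cond_exp M ?G (indicator ?E00)) x = real_cond_exp M ?F (indicator ?E00) x"
    by (rule F.real_cond_exp_nested_subalg[OF subG subGF int00])
  have fcm: "(\<lambda>v. codds_on M ?G RM (event_of M RY) v * codds_on M ?G RY (event_of M RM) v) \<in> borel_measurable M"
    unfolding c1 c2 p_def cS_def cR_def cprob_def by measurable
  have A4: "AE x in M. real_cond_exp M ?F (\<lambda>v. indicator ?E11 v * (codds_on M ?G RM (event_of M RY) v * codds_on M ?G RY (event_of M RM) v)) x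
      = real_cond_exp M ?F (\<lambda>x. g x * indicator ?E11 x) x"
  proof (rule F.real_cond_exp_cong)
    show "AE x in M. indicator ?E11 x * (codds_on M ?G RM (event_of M RY) x * codds_on M ?G RY (event_of M RM) x) = g x * indicator ?E11 x"
      using fcg by eventually_elim simp
    show "(\<lambda>v. indicator ?E11 v * (codds_on M ?G RM (event_of M RY) v * codds_on M ?G RY (event_of M RM) v)) \<in> borel_measurable M"
      using fcm by measurable
  qed simp
  show ?thesis using A1 A2 A3 A4 unfolding cexp_on_def
    by eventually_elim (simp add: cprob_def)
qed

end
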